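(* Let $\mathcal{X}=\mathbb{R}^d$, $\mathcal{X}_n=\{x\in\mathbb{R}^d:|x|\le n\}$, let $Q$ be a probability transition kernel on $\mathbb{R}^d$, and assume there exist a non-increasing sequence $\alpha_n\in(0,1]$ and probability measures $\nu_n$ such that $Q(x,A)\ge\alpha_n\nu_n(A)$ for all Borel $A$, all $x\in\mathcal{X}_n$ and all $n\in\mathbb{N}$. Let $V(x):=g(|x|)$ where $g:\mathbb{R}_+\to\mathbb{R}_+$ is non-decreasing with $g(u)\to\infty$ as $u\to\infty$. Let $X_t$, $t\in\mathbb{N}$, be a Markov chain with kernel $Q$ whose initial state satisfies $\sup_{k\in\mathbb{N}}E[V(X_k)]<\infty$. Then $\mathcal{L}(X_t)$ converges in total variation to some probability $\mu_*$, and for every $n\in\mathbb{N}$ with $g(n)>0$ and every $t\in\mathbb{N}$, $$\|\mathcal{L}(X_t)-\mu_*\|_{TV}\le 4\,\frac{\sup_{k\in\mathbb{N}}E[V(X_k)]}{g(n)}+2(1-\alpha_n)^t.$$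
   Context: $\|\mu\|_{TV}:=\sup_{|\phi|\le 1}|\int\phi\,d\mu|$ over measurable $\phi$; $|\cdot|$ is the Euclidean norm; $\mathcal{L}(Z)$ denotes the law of $Z$. *)

theory Defs
  imports "HOL-Probability.Probability"
begin

definition tv_norm :: "'a measure \<Rightarrow> 'a measure \<Rightarrow> real" where
  "tv_norm \<mu> \<nu> =
     (SUP \<phi> \<in> {\<phi> \<in> borel_measurable \<mu>. \<forall>x\<in>space \<mu>. \<bar>\<phi> x\<bar> \<le> 1}.
        \<bar>(\<integral>x. \<phi> x \<partial>\<mu>) - (\<integral>x. \<phi> x \<partial>\<nu>)\<bar>)"

definition prob_kernel :: "('a::topological_space \<Rightarrow> 'a measure) \<Rightarrow> bool" where
  "prob_kernel Q \<longleftrightarrow> Q \<in> borel \<rightarrow>\<^sub>M prob_algebra borel"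

text \<open>X is a (time-homogeneous) Markov chain with transition kernel Q on the
  probability space M: the X t are Borel random variables and, for every t,
  P(X_0 in A_0, ..., X_t in A_t, X_(t+1) in B)
   = E[1{X_0 in A_0, ..., X_t in A_t} Q(X_t, B)],
  i.e. P(X_(t+1) in B | X_0, ..., X_t) = Q(X_t, B) a.s.\<close>
definition markov_chain :: "'b measure \<Rightarrow> ('a::topological_space \<Rightarrow> 'a measure)
    \<Rightarrow> (nat \<Rightarrow> 'b \<Rightarrow> 'a) \<Rightarrow> bool" where
  "markov_chain M Q X \<longleftrightarrow>
     prob_space M \<and> (\<forall>t. X t \<in> borel_measurable M) \<and>
     (\<forall>t (A :: nat \<Rightarrow> 'a set) B. (\<forall>i\<le>t. A i \<in> sets borel) \<longrightarrow> B \<in> sets borel \<longrightarrow>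
        measure M {\<omega> \<in> space M. (\<forall>i\<le>t. X i \<omega> \<in> A i) \<and> X (Suc t) \<omega> \<in> B}
        = (\<integral>\<omega>. indicator {\<omega> \<in> space M. \<forall>i\<le>t. X i \<omega> \<in> A i} \<omega>
                  * measure (Q (X t \<omega>)) B \<partial>M))"

end

theory Submission imports Defs begin


lemma meas_m: "sets m = sets borel \<Longrightarrow> f \<in> borel_measurable borel \<Longrightarrow> f \<in> borel_measurable m"
  using measurable_cong_sets by blast

lemma bnd_integrable:
  fixes f :: "'a::topological_space \<Rightarrow> real"
  assumes "prob_space m" "sets m = sets borel" "f \<in> borel_measurable borel" "\<And>x. \<bar>f x\<bar> \<le> C"
  shows "integrable m f"
proof -
  interpret prob_space m by fact
  show ?thesis
    by (rule integrable_const_bound[where B=C]) (use assms meas_m in auto)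
qed

lemma bnd_integral:
  fixes f :: "'a::topological_space \<Rightarrow> real"
  assumes "prob_space m" "sets m = sets borel" "f \<in> borel_measurable borel" "\<And>x. \<bar>f x\<bar> \<le> C"
  shows "\<bar>integral\<^sup>L m f\<bar> \<le> C"
proof -
  interpret prob_space m by fact
  have i: "integrable m f" using bnd_integrable assms by blast
  have "integral\<^sup>L m f \<le> C" by (rule integral_le_const[OF i]) (intro AE_I2, metis assms(4) abs_le_D1)
  moreover have "-C \<le> integral\<^sup>L m f" by (rule integral_ge_const[OF i]) (intro AE_I2, metis assms(4) abs_le_D2 minus_le_iff)
  ultimately show ?thesis by auto
qed

lemma tv_le:
  fixes \<phi> :: "'a::topological_space \<Rightarrow> real"
  assumes "prob_space m1" "sets m1 = sets borel" "prob_space m2" "sets m2 = sets borel"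
    "\<phi> \<in> borel_measurable borel" "\<And>x. \<bar>\<phi> x\<bar> \<le> 1"
  shows "\<bar>integral\<^sup>L m1 \<phi> - integral\<^sup>L m2 \<phi>\<bar> \<le> tv_norm m1 m2"
proof -
  let ?S = "{\<phi> \<in> borel_measurable m1. \<forall>x\<in>space m1. \<bar>\<phi> x\<bar> \<le> (1::real)}"
  have mem: "\<phi> \<in> ?S" using assms meas_m by auto
  have bdd: "bdd_above ((\<lambda>\<phi>. \<bar>integral\<^sup>L m1 \<phi> - integral\<^sup>L m2 \<phi>\<bar>) ` ?S)"
  proof (rule bdd_aboveI2)
    fix \<psi> :: "'a \<Rightarrow> real" assume "\<psi> \<in> ?S"
    then have "\<psi> \<in> borel_measurable borel" "\<And>x. \<bar>\<psi> x\<bar> \<le> 1" using assms(2) sets_eq_imp_space_eq[OF assms(2)]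
      by (auto simp: measurable_cong_sets[OF assms(2) refl])
    then have "\<bar>integral\<^sup>L m1 \<psi>\<bar> \<le> 1" "\<bar>integral\<^sup>L m2 \<psi>\<bar> \<le> 1" using bnd_integral assms by blast+
    then show "\<bar>integral\<^sup>L m1 \<psi> - integral\<^sup>L m2 \<psi>\<bar> \<le> 2" by linarith
  qed
  show ?thesis unfolding tv_norm_def by (rule cSUP_upper[OF mem bdd])
qed

lemma tv_least:
  fixes m1 m2 :: "'a::topological_space measure"
  assumes "sets m1 = sets borel"
    "\<And>\<phi>. \<phi> \<in> borel_measurable borel \<Longrightarrow> (\<And>x. \<bar>\<phi> x\<bar> \<le> 1) \<Longrightarrow> \<bar>integral\<^sup>L m1 \<phi> - integral\<^sup>L m2 \<phi>\<bar> \<le> b"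
  shows "tv_norm m1 m2 \<le> b"
proof -
  let ?S = "{\<phi> \<in> borel_measurable m1. \<forall>x\<in>space m1. \<bar>\<phi> x\<bar> \<le> (1::real)}"
  have z: "(\<lambda>_. 0::real) \<in> ?S" by simp
  have ne: "?S \<noteq> {}" using z by blast
  have bd: "\<bar>integral\<^sup>L m1 \<psi> - integral\<^sup>L m2 \<psi>\<bar> \<le> b" if "\<psi> \<in> ?S" for \<psi>
  proof -
    have sp: "space m1 = UNIV" using sets_eq_imp_space_eq[OF assms(1)] by simp
    have "\<psi> \<in> borel_measurable m1" "\<forall>x\<in>space m1. \<bar>\<psi> x\<bar> \<le> 1" using that by auto
    then have "\<psi> \<in> borel_measurable borel" "\<And>x. \<bar>\<psi> x\<bar> \<le> 1"
      using measurable_cong_sets[OF assms(1) refl] sp by auto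
    then show ?thesis by (rule assms(2))
  qed
  show ?thesis unfolding tv_norm_def by (rule cSUP_least[OF ne bd])
qed

lemma tv_nonneg:
  fixes m1 m2 :: "'a::topological_space measure"
  assumes "prob_space m1" "sets m1 = sets borel" "prob_space m2" "sets m2 = sets borel"
  shows "0 \<le> tv_norm m1 m2"
  using tv_le[OF assms, of "\<lambda>_. 0"] by simp



lemma pos_int:
  fixes N P :: "'a::topological_space measure" and f :: "'a \<Rightarrow> real"
  assumes N: "prob_space N" "sets N = sets borel" and P: "prob_space P" "sets P = sets borel"
    and al: "0 \<le> \<alpha>"
    and le: "\<And>A. A \<in> sets borel \<Longrightarrow> \<alpha> * measure N A \<le> measure P A"
    and f: "f \<in> borel_measurable borel" "\<And>x. 0 \<le> f x" "\<And>x. f x \<le> C"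
  shows "\<alpha> * integral\<^sup>L N f \<le> integral\<^sup>L P f"
proof -
  interpret N: prob_space N by fact
  interpret P: prob_space P by fact
  have fb: "\<And>x. \<bar>f x\<bar> \<le> C" using f by (metis abs_of_nonneg)
  have iN: "integrable N f" by (rule bnd_integrable[OF N f(1) fb])
  have iP: "integrable P f" by (rule bnd_integrable[OF P f(1) fb])
  have sp: "space N = space P" using N(2) P(2) sets_eq_imp_space_eq by metis
  have sl: "scale_measure (ennreal \<alpha>) N \<le> P"
    unfolding le_measure_iff
  proof (simp add: space_scale_measure sp N(2) P(2) le_fun_def, intro allI)
    fix A
    show "ennreal \<alpha> * emeasure N A \<le> emeasure P A"
    proof (cases "A \<in> sets borel")
      case True
      have "ennreal \<alpha> * emeasure N A = ennreal (\<alpha> * measure N A)"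
        using al by (simp add: N.emeasure_eq_measure ennreal_mult)
      also have "\<dots> \<le> ennreal (measure P A)" using le[OF True] by (rule ennreal_leI)
      finally show ?thesis by (simp add: P.emeasure_eq_measure)
    next
      case False
      then have "A \<notin> sets N" using N(2) by simp
      then show ?thesis by (simp add: emeasure_notin_sets)
    qed
  qed
  have fm: "(\<lambda>x. ennreal (f x)) \<in> borel_measurable N" using meas_m[OF N(2) f(1)] by measurable
  have "ennreal \<alpha> * (\<integral>\<^sup>+x. ennreal (f x) \<partial>N) = (\<integral>\<^sup>+x. ennreal (f x) \<partial>scale_measure (ennreal \<alpha>) N)"
    by (rule nn_integral_scale_measure[OF fm, symmetric])
  also have "\<dots> \<le> (\<integral>\<^sup>+x. ennreal (f x) \<partial>P)"
    by (rule nn_integral_mono_measure) (use sl N(2) P(2) in auto)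
  finally have "ennreal \<alpha> * ennreal (integral\<^sup>L N f) \<le> ennreal (integral\<^sup>L P f)"
    using nn_integral_eq_integral[OF iN] nn_integral_eq_integral[OF iP] f(2) by simp
  then have "ennreal (\<alpha> * integral\<^sup>L N f) \<le> ennreal (integral\<^sup>L P f)"
    using al by (simp add: ennreal_mult')
  moreover have "0 \<le> integral\<^sup>L P f" using f(2) by simp
  ultimately show ?thesis by (simp add: ennreal_le_iff)
qed



lemma contract:
  fixes Q :: "'a::euclidean_space \<Rightarrow> 'a measure" and \<phi> :: "'a \<Rightarrow> real"
  assumes K: "Q \<in> borel \<rightarrow>\<^sub>M prob_algebra borel"
    and m1: "m1 \<in> space (prob_algebra borel)" and m2: "m2 \<in> space (prob_algebra borel)"
    and al: "0 < \<alpha>" "\<alpha> \<le> 1" and nu: "\<nu> \<in> space (prob_algebra borel)"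
    and Bs: "B \<in> sets borel"
    and mi: "\<And>x A. x \<in> B \<Longrightarrow> A \<in> sets borel \<Longrightarrow> \<alpha> * measure \<nu> A \<le> measure (Q x) A"
    and c1: "measure m1 (-B) \<le> c" and c2: "measure m2 (-B) \<le> c"
    and \<phi>: "\<phi> \<in> borel_measurable borel" "\<And>x. \<bar>\<phi> x\<bar> \<le> 1"
  shows "\<bar>integral\<^sup>L (m1 \<bind> Q) \<phi> - integral\<^sup>L (m2 \<bind> Q) \<phi>\<bar> \<le> (1-\<alpha>) * tv_norm m1 m2 + 4*\<alpha>*c"
proof -
  have K': "Q \<in> borel \<rightarrow>\<^sub>M subprob_algebra borel" by (rule measurable_prob_algebraD[OF K])
  have Qx: "prob_space (Q x)" "sets (Q x) = sets borel" for x
    using measurable_space[OF K, of x] by (auto simp: space_prob_algebra)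
  have m1p: "prob_space m1" "sets m1 = sets borel" and m2p: "prob_space m2" "sets m2 = sets borel"
    and nup: "prob_space \<nu>" "sets \<nu> = sets borel"
    using m1 m2 nu by (auto simp: space_prob_algebra)
  define P where "P x = integral\<^sup>L (Q x) \<phi>" for x
  have Pm: "P \<in> borel_measurable borel"
    unfolding P_def using measurable_compose[OF K' integral_measurable_subprob_algebra[OF \<phi>(1)]] by simp
  have Pb: "\<bar>P x\<bar> \<le> 1" for x unfolding P_def by (rule bnd_integral[OF Qx \<phi>])
  have bind: "integral\<^sup>L (m \<bind> Q) \<phi> = integral\<^sup>L m P" if "prob_space m" "sets m = sets borel" for m
  proof -
    interpret prob_space m by fact
    have Km: "Q \<in> m \<rightarrow>\<^sub>M subprob_algebra borel" using K' measurable_cong_sets[OF that(2) refl] by blast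
    show ?thesis unfolding P_def
      by (rule integral_bind[OF \<phi>(1) \<phi>(2) Km, where B'=1])
         (auto intro!: finite_measure AE_I2 simp: prob_space.emeasure_space_1[OF Qx(1)])
  qed
  define a where "a = integral\<^sup>L \<nu> \<phi>"
  have ab: "\<bar>a\<bar> \<le> 1" unfolding a_def by (rule bnd_integral[OF nup \<phi>])
  have onB: "\<bar>P x - \<alpha> * a\<bar> \<le> 1 - \<alpha>" if "x \<in> B" for x
  proof -
    interpret Qx: prob_space "Q x" by (rule Qx)
    interpret nu: prob_space \<nu> by (rule nup)
    have pb: "\<And>y. -1 \<le> \<phi> y \<and> \<phi> y \<le> 1" using \<phi>(2) abs_le_iff by (metis minus_le_iff)
    have i1: "integrable (Q x) \<phi>" "integrable \<nu> \<phi>" using bnd_integrable Qx nup \<phi> by blast+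
    have "\<alpha> * integral\<^sup>L \<nu> (\<lambda>y. 1 + \<phi> y) \<le> integral\<^sup>L (Q x) (\<lambda>y. 1 + \<phi> y)"
      by (rule pos_int[OF nup Qx, where C=2]) (use al mi[OF that] \<phi> pb in \<open>auto, smt (verit) pb\<close>)
    moreover have "\<alpha> * integral\<^sup>L \<nu> (\<lambda>y. 1 - \<phi> y) \<le> integral\<^sup>L (Q x) (\<lambda>y. 1 - \<phi> y)"
      by (rule pos_int[OF nup Qx, where C=2]) (use al mi[OF that] \<phi> pb in \<open>auto simp: add.commute[of 1] minus_le_iff\<close>)
    ultimately show ?thesis using i1 unfolding P_def a_def
      by (simp add: algebra_simps Qx.prob_space nu.prob_space)
  qed
  define k where "k x = (if x \<in> B then (P x - \<alpha> * a) / (1 - \<alpha>) else P x)" for x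
  define u where "u x = indicator (-B) x * (P x - a)" for x
  have km: "k \<in> borel_measurable borel" unfolding k_def using Pm Bs by measurable
  have um: "u \<in> borel_measurable borel" unfolding u_def using Pm Bs by measurable
  have kb: "\<bar>k x\<bar> \<le> 1" for x
  proof (cases "x \<in> B")
    case True
    show ?thesis
    proof (cases "\<alpha> = 1")
      case False
      then have "0 < 1 - \<alpha>" using al by simp
      then show ?thesis using onB[OF True] True by (simp add: k_def abs_divide)
    qed (simp add: k_def True)
  qed (simp add: k_def Pb)
  have ub: "\<bar>u x\<bar> \<le> 2" for x
    using Pb[of x] ab by (auto simp: u_def indicator_def)
  have decomp: "P x = (1-\<alpha>) * k x + \<alpha> * a + \<alpha> * u x" for x
  proof (cases "x \<in> B")
    case True
    show ?thesis
    proof (cases "\<alpha> = 1")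
      case True
      then show ?thesis using onB[OF \<open>x \<in> B\<close>] \<open>x \<in> B\<close> by (simp add: k_def u_def)
    next
      case False
      then have "1 - \<alpha> \<noteq> 0" by simp
      then show ?thesis using True by (simp add: k_def u_def)
    qed
  qed (simp add: k_def u_def algebra_simps)
  have ueq: "\<bar>integral\<^sup>L m u\<bar> \<le> 2 * c" if mp: "prob_space m" "sets m = sets borel" "measure m (-B) \<le> c" for m
  proof -
    interpret prob_space m by fact
    have iu: "integrable m u" by (rule bnd_integrable[OF mp(1,2) um ub])
    have ule: "u x \<le> 2*indicator(-B) x \<and> -u x \<le> 2*indicator(-B) x" for x
      using Pb[of x] ab by (auto simp: u_def indicator_def)
    have Bm: "-B \<in> sets m" using Bs mp(2) by simp
    have ii: "integrable m (\<lambda>x. (2::real) * indicator (-B) x)" by (rule integrable_mult_right, rule integrable_real_indicator[OF Bm], simp add: less_top[symmetric])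
    have "integral\<^sup>L m u \<le> integral\<^sup>L m (\<lambda>x. (2::real) * indicator (-B) x)"
      by (rule integral_mono[OF iu ii]) (use ule in auto)
    moreover have "- integral\<^sup>L m u \<le> integral\<^sup>L m (\<lambda>x. (2::real) * indicator (-B) x)"
    proof -
      have "integral\<^sup>L m (\<lambda>x. - u x) \<le> integral\<^sup>L m (\<lambda>x. (2::real) * indicator (-B) x)"
        by (rule integral_mono[OF _ ii]) (use iu ule in auto)
      then show ?thesis by simp
    qed
    moreover have "integral\<^sup>L m (\<lambda>x. (2::real) * indicator (-B) x) = 2 * measure m (-B)"
      using Bm by (simp add: integrable_real_indicator)
    ultimately show ?thesis using mp(3) by linarith
  qed
  have Peq: "integral\<^sup>L m P = (1-\<alpha>) * integral\<^sup>L m k + \<alpha> * a + \<alpha> * integral\<^sup>L m u"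
    if mp: "prob_space m" "sets m = sets borel" for m
  proof -
    interpret prob_space m by fact
    have ik: "integrable m k" by (rule bnd_integrable[OF mp km kb])
    have iu: "integrable m u" by (rule bnd_integrable[OF mp um ub])
    have "integral\<^sup>L m P = integral\<^sup>L m (\<lambda>x. (1-\<alpha>) * k x + \<alpha> * a + \<alpha> * u x)"
      using decomp by presburger
    also have "\<dots> = (1-\<alpha>) * integral\<^sup>L m k + \<alpha> * a + \<alpha> * integral\<^sup>L m u"
      using ik iu by (simp add: prob_space)
    finally show ?thesis .
  qed
  have tk: "\<bar>integral\<^sup>L m1 k - integral\<^sup>L m2 k\<bar> \<le> tv_norm m1 m2"
    by (rule tv_le[OF m1p m2p km kb])
  have u1: "\<bar>integral\<^sup>L m1 u\<bar> \<le> 2 * c" by (rule ueq[OF m1p c1])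
  have u2: "\<bar>integral\<^sup>L m2 u\<bar> \<le> 2 * c" by (rule ueq[OF m2p c2])
  have "integral\<^sup>L (m1 \<bind> Q) \<phi> - integral\<^sup>L (m2 \<bind> Q) \<phi>
        = (1-\<alpha>) * (integral\<^sup>L m1 k - integral\<^sup>L m2 k) + \<alpha> * (integral\<^sup>L m1 u - integral\<^sup>L m2 u)"
    using bind[OF m1p] bind[OF m2p] Peq[OF m1p] Peq[OF m2p] by (simp add: algebra_simps)
  also have "\<bar>\<dots>\<bar> \<le> (1-\<alpha>) * \<bar>integral\<^sup>L m1 k - integral\<^sup>L m2 k\<bar> + \<alpha> * \<bar>integral\<^sup>L m1 u - integral\<^sup>L m2 u\<bar>"
    using al abs_triangle_ineq[of "(1 - \<alpha>) * (integral\<^sup>L m1 k - integral\<^sup>L m2 k)" "\<alpha> * (integral\<^sup>L m1 u - integral\<^sup>L m2 u)"]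
    by (simp add: abs_mult)
  also have "\<dots> \<le> (1-\<alpha>) * tv_norm m1 m2 + \<alpha> * (4 * c)"
    apply (intro add_mono mult_left_mono)
    using tk u1 u2 al by auto
  finally show ?thesis by simp
qed



definition adm :: "('a::topological_space \<Rightarrow> real) \<Rightarrow> bool" where
  "adm \<phi> \<longleftrightarrow> \<phi> \<in> borel_measurable borel \<and> (\<forall>x. \<bar>\<phi> x\<bar> \<le> 1)"

lemma adm_ind: "A \<in> sets borel \<Longrightarrow> adm (indicator A :: 'a::topological_space \<Rightarrow> real)"
  unfolding adm_def by (auto simp: indicator_def)

lemma int_ind:
  assumes "m \<in> space (prob_algebra borel)" "A \<in> sets borel"
  shows "integral\<^sup>L m (indicator A :: 'a::topological_space \<Rightarrow> real) = measure m A"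
proof -
  have "sets m = sets borel" "prob_space m" using assms(1) by (auto simp: space_prob_algebra)
  then interpret prob_space m by simp
  show ?thesis using assms(2) \<open>sets m = sets borel\<close> by (simp add: emeasure_finite less_top[symmetric])
qed

lemma approx_int:
  fixes \<phi> :: "'a::topological_space \<Rightarrow> real"
  assumes m: "m \<in> space (prob_algebra borel)" and \<phi>: "adm \<phi>" and k: "0 < k"
  defines "\<psi> \<equiv> \<lambda>x. real_of_int \<lfloor>real k * \<phi> x\<rfloor> / real k"
  shows "adm \<psi>" "0 \<le> integral\<^sup>L m \<phi> - integral\<^sup>L m \<psi>" "integral\<^sup>L m \<phi> - integral\<^sup>L m \<psi> \<le> 1 / real k"
    "integral\<^sup>L m \<psi> = (\<Sum>j\<in>{-int k..int k}. (real_of_int j / real k) * measure m {x. \<lfloor>real k * \<phi> x\<rfloor> = j})"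
proof -
  have mp: "sets m = sets borel" "prob_space m" using m by (auto simp: space_prob_algebra)
  interpret prob_space m by fact
  have \<phi>m: "\<phi> \<in> borel_measurable borel" and \<phi>b: "\<And>x. -1 \<le> \<phi> x \<and> \<phi> x \<le> 1"
    using \<phi> unfolding adm_def by (auto simp: abs_le_iff)
  have kr: "0 < real k" using k by simp
  have fl: "-int k \<le> \<lfloor>real k * \<phi> x\<rfloor> \<and> \<lfloor>real k * \<phi> x\<rfloor> \<le> int k" for x
  proof -
    have "- real k \<le> real k * \<phi> x" "real k * \<phi> x \<le> real k"
      using mult_left_mono[OF conjunct1[OF \<phi>b[of x]], of "real k"] mult_left_mono[OF conjunct2[OF \<phi>b[of x]], of "real k"] kr by auto
    then show ?thesis by (auto simp: le_floor_iff floor_le_iff)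
  qed
  have \<psi>m: "\<psi> \<in> borel_measurable borel" unfolding \<psi>_def using \<phi>m by measurable
  have \<psi>b: "\<bar>\<psi> x\<bar> \<le> 1" for x
  proof -
    have "\<bar>real_of_int \<lfloor>real k * \<phi> x\<rfloor>\<bar> \<le> real k" using fl[of x] by linarith
    then show ?thesis unfolding \<psi>_def using kr by (simp add: abs_divide)
  qed
  show "adm \<psi>" unfolding adm_def using \<psi>m \<psi>b by auto
  have lo: "\<psi> x \<le> \<phi> x" for x
  proof -
    have "real_of_int \<lfloor>real k * \<phi> x\<rfloor> \<le> real k * \<phi> x" by (rule of_int_floor_le)
    then show ?thesis unfolding \<psi>_def using kr by (simp add: divide_le_eq mult.commute)
  qed
  have hi: "\<phi> x \<le> \<psi> x + 1 / real k" for x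
  proof -
    have "real k * \<phi> x \<le> real_of_int \<lfloor>real k * \<phi> x\<rfloor> + 1" by linarith
    then show ?thesis unfolding \<psi>_def using kr by (simp add: field_simps)
  qed
  have i\<phi>: "integrable m \<phi>" using bnd_integrable[OF mp(2,1) \<phi>m] \<phi> adm_def by blast
  have i\<psi>: "integrable m \<psi>" using bnd_integrable[OF mp(2,1) \<psi>m \<psi>b] .
  have "integral\<^sup>L m \<psi> \<le> integral\<^sup>L m \<phi>" by (rule integral_mono[OF i\<psi> i\<phi>]) (use lo in auto)
  then show "0 \<le> integral\<^sup>L m \<phi> - integral\<^sup>L m \<psi>" by simp
  have "integral\<^sup>L m \<phi> \<le> integral\<^sup>L m (\<lambda>x. \<psi> x + 1 / real k)"
    by (rule integral_mono[OF i\<phi>]) (use i\<psi> hi in auto)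
  also have "\<dots> = integral\<^sup>L m \<psi> + 1 / real k" using i\<psi> by (simp add: prob_space)
  finally show "integral\<^sup>L m \<phi> - integral\<^sup>L m \<psi> \<le> 1 / real k" by simp
  define E where "E j = {x. \<lfloor>real k * \<phi> x\<rfloor> = j}" for j
  have Em: "E j \<in> sets borel" for j unfolding E_def using \<phi>m by measurable
  have rep: "\<psi> x = (\<Sum>j\<in>{-int k..int k}. (real_of_int j / real k) * indicator (E j) x)" for x
  proof -
    have "(\<Sum>j\<in>{-int k..int k}. (real_of_int j / real k) * indicator (E j) x)
        = (\<Sum>j\<in>{-int k..int k}. if \<lfloor>real k * \<phi> x\<rfloor> = j then real_of_int j / real k else 0)"
      by (rule sum.cong) (auto simp: E_def indicator_def)
    also have "\<dots> = \<psi> x" using fl[of x] by (simp add: sum.delta \<psi>_def)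
    finally show ?thesis by simp
  qed
  have "integral\<^sup>L m \<psi> = integral\<^sup>L m (\<lambda>x. \<Sum>j\<in>{-int k..int k}. (real_of_int j / real k) * indicator (E j) x)"
    using rep by presburger
  also have "\<dots> = (\<Sum>j\<in>{-int k..int k}. integral\<^sup>L m (\<lambda>x. (real_of_int j / real k) * indicator (E j) x))"
    by (rule Bochner_Integration.integral_sum[where f="\<lambda>j x. real_of_int j / real k * indicator (E j) x"]) (use Em mp(1) in \<open>auto simp: emeasure_finite less_top[symmetric]\<close>)
  also have "\<dots> = (\<Sum>j\<in>{-int k..int k}. (real_of_int j / real k) * measure m (E j))"
    using Em mp(1) by (simp add: emeasure_finite less_top[symmetric])
  finally show "integral\<^sup>L m \<psi> = (\<Sum>j\<in>{-int k..int k}. (real_of_int j / real k) * measure m {x. \<lfloor>real k * \<phi> x\<rfloor> = j})"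
    unfolding E_def .
qed

lemma tv_limit:
  fixes \<mu> :: "nat \<Rightarrow> 'a::topological_space measure"
  assumes P: "\<And>t. \<mu> t \<in> space (prob_algebra borel)"
    and C: "\<And>\<epsilon>. 0 < \<epsilon> \<Longrightarrow> \<exists>T. \<forall>t\<ge>T. \<forall>s \<phi>. adm \<phi> \<longrightarrow> \<bar>integral\<^sup>L (\<mu> t) \<phi> - integral\<^sup>L (\<mu> (t+s)) \<phi>\<bar> \<le> \<epsilon>"
  shows "\<exists>m \<in> space (prob_algebra borel). \<forall>\<phi>. adm \<phi> \<longrightarrow> (\<lambda>s. integral\<^sup>L (\<mu> s) \<phi>) \<longlonglongrightarrow> integral\<^sup>L m \<phi>"
proof -
  have Pp: "prob_space (\<mu> t)" "sets (\<mu> t) = sets borel" for t using P[of t] by (auto simp: space_prob_algebra)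
  have conv: "convergent (\<lambda>s. integral\<^sup>L (\<mu> s) \<phi>)" if "adm \<phi>" for \<phi>
    unfolding Cauchy_convergent_iff[symmetric]
  proof (rule CauchyI)
    fix e :: real assume "0 < e"
    then obtain T where T: "\<forall>t\<ge>T. \<forall>s \<phi>. adm \<phi> \<longrightarrow> \<bar>integral\<^sup>L (\<mu> t) \<phi> - integral\<^sup>L (\<mu> (t+s)) \<phi>\<bar> \<le> e/2"
      using C[of "e/2"] by auto
    have "norm (integral\<^sup>L (\<mu> m) \<phi> - integral\<^sup>L (\<mu> n) \<phi>) < e" if "m \<ge> T" "n \<ge> T" for m n
    proof (cases "m \<le> n")
      case True
      then have "n = m + (n - m)" by simp
      then have "\<bar>integral\<^sup>L (\<mu> m) \<phi> - integral\<^sup>L (\<mu> n) \<phi>\<bar> \<le> e/2"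
        using T that \<open>adm \<phi>\<close> by metis
      then show ?thesis using \<open>0 < e\<close> by simp
    next
      case False
      then have "m = n + (m - n)" by simp
      then have "\<bar>integral\<^sup>L (\<mu> n) \<phi> - integral\<^sup>L (\<mu> m) \<phi>\<bar> \<le> e/2"
        using T that \<open>adm \<phi>\<close> by metis
      then show ?thesis using \<open>0 < e\<close> by (simp add: abs_minus_commute)
    qed
    then show "\<exists>M. \<forall>m\<ge>M. \<forall>n\<ge>M. norm (integral\<^sup>L (\<mu> m) \<phi> - integral\<^sup>L (\<mu> n) \<phi>) < e" by blast
  qed
  define L where "L \<phi> = lim (\<lambda>s. integral\<^sup>L (\<mu> s) \<phi>)" for \<phi> :: "'a \<Rightarrow> real"
  have Lt: "(\<lambda>s. integral\<^sup>L (\<mu> s) \<phi>) \<longlonglongrightarrow> L \<phi>" if "adm \<phi>" for \<phi>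
    unfolding L_def using conv[OF that] convergent_LIMSEQ_iff by blast
  have rate: "\<exists>T. \<forall>t\<ge>T. \<forall>\<phi>. adm \<phi> \<longrightarrow> \<bar>integral\<^sup>L (\<mu> t) \<phi> - L \<phi>\<bar> \<le> \<epsilon>" if ep: "0 < \<epsilon>" for \<epsilon>
  proof -
    obtain T where T: "\<forall>t\<ge>T. \<forall>s \<phi>. adm \<phi> \<longrightarrow> \<bar>integral\<^sup>L (\<mu> t) \<phi> - integral\<^sup>L (\<mu> (t+s)) \<phi>\<bar> \<le> \<epsilon>"
      using C[OF ep] by auto
    have "\<bar>integral\<^sup>L (\<mu> t) \<phi> - L \<phi>\<bar> \<le> \<epsilon>" if "t \<ge> T" "adm \<phi>" for t \<phi>
    proof (rule LIMSEQ_le_const2)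
      show "(\<lambda>s. \<bar>integral\<^sup>L (\<mu> t) \<phi> - integral\<^sup>L (\<mu> (s + t)) \<phi>\<bar>) \<longlonglongrightarrow> \<bar>integral\<^sup>L (\<mu> t) \<phi> - L \<phi>\<bar>"
        by (intro tendsto_intros LIMSEQ_ignore_initial_segment[OF Lt[OF that(2)]])
      show "\<exists>N. \<forall>n\<ge>N. \<bar>integral\<^sup>L (\<mu> t) \<phi> - integral\<^sup>L (\<mu> (n + t)) \<phi>\<bar> \<le> \<epsilon>"
        using T that by (metis add.commute)
    qed
    then show ?thesis by blast
  qed
  define f where "f A = L (indicator A)" for A :: "'a set"
  have fmeas: "(\<lambda>s. measure (\<mu> s) A) \<longlonglongrightarrow> f A" if "A \<in> sets borel" for A
    using Lt[OF adm_ind[OF that]] int_ind[OF P that] unfolding f_def by simp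
  have fnn: "0 \<le> f A" if "A \<in> sets borel" for A
    by (rule LIMSEQ_le_const[OF fmeas[OF that]]) simp
  have f0: "f {} = 0" using fmeas[of "{}"] LIMSEQ_unique[of "\<lambda>_. 0::real"] by simp
  have f1: "f UNIV = 1"
  proof -
    have "measure (\<mu> s) UNIV = 1" for s
      using prob_space.prob_space[OF Pp(1)[of s]] sets_eq_imp_space_eq[OF Pp(2)[of s]] by simp
    then show ?thesis using fmeas[of UNIV] LIMSEQ_unique[of "\<lambda>_. 1::real"] by simp
  qed
  have fad: "measure (\<mu> s) (\<Union>i\<in>{..<N}. A i) = (\<Sum>i<N. measure (\<mu> s) (A i))"
    if "range A \<subseteq> sets borel" "disjoint_family A" for A :: "nat \<Rightarrow> 'a set" and s N
  proof -
    interpret prob_space "\<mu> s" by (rule Pp)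
    show ?thesis
      by (rule measure_finite_Union) (use that Pp(2)[of s] disjoint_family_on_mono[OF subset_UNIV that(2)] in \<open>auto simp: emeasure_finite\<close>)
  qed
  have ca: "(\<lambda>i. f (A i)) sums f (\<Union>i. A i)" if A: "range A \<subseteq> sets borel" "disjoint_family A" for A
  proof -
    define U where "U N = (\<Union>i\<in>{..<N}. A i)" for N
    have Um: "U N \<in> sets borel" for N unfolding U_def using A by auto
    have Am: "(\<Union>i. A i) \<in> sets borel" using A by auto
    have part: "(\<Sum>i<N. f (A i)) = f (U N)" for N
    proof (rule LIMSEQ_unique)
      show "(\<lambda>s. \<Sum>i<N. measure (\<mu> s) (A i)) \<longlonglongrightarrow> (\<Sum>i<N. f (A i))"
        by (intro tendsto_sum fmeas) (use A in auto)
      show "(\<lambda>s. \<Sum>i<N. measure (\<mu> s) (A i)) \<longlonglongrightarrow> f (U N)"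
        using fmeas[OF Um[of N]] unfolding U_def fad[OF A] .
    qed
    show ?thesis unfolding sums_def part LIMSEQ_iff
    proof (intro allI impI)
      fix r :: real assume "0 < r"
      then obtain T where T: "\<forall>t\<ge>T. \<forall>\<phi>. adm \<phi> \<longrightarrow> \<bar>integral\<^sup>L (\<mu> t) \<phi> - L \<phi>\<bar> \<le> r/4"
        using rate[of "r/4"] by auto
      have TB: "\<bar>measure (\<mu> T) B - f B\<bar> \<le> r/4" if "B \<in> sets borel" for B
        using T[rule_format, OF order.refl adm_ind[OF that]] int_ind[OF P that] unfolding f_def by simp
      have "(\<lambda>i. measure (\<mu> T) (A i)) sums measure (\<mu> T) (\<Union>i. A i)"
        by (rule measure_UNION) (use A Pp(2)[of T] finite_measure.emeasure_finite[OF prob_space.finite_measure[OF Pp(1)[of T]]] in auto)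
      then have "(\<lambda>N. measure (\<mu> T) (U N)) \<longlonglongrightarrow> measure (\<mu> T) (\<Union>i. A i)"
        unfolding sums_def U_def fad[OF A] .
      then obtain N0 where N0: "\<forall>N\<ge>N0. norm (measure (\<mu> T) (U N) - measure (\<mu> T) (\<Union>i. A i)) < r/4"
        using \<open>0 < r\<close> unfolding LIMSEQ_iff by (meson divide_pos_pos zero_less_numeral)
      have "norm (f (U N) - f (\<Union>i. A i)) < r" if "N \<ge> N0" for N
        using TB[OF Um[of N]] TB[OF Am] N0[rule_format, OF that] \<open>0 < r\<close> by (simp only: real_norm_def)
      then show "\<exists>no. \<forall>n\<ge>no. norm (f (U n) - f (\<Union>i. A i)) < r" by blast
    qed
  qed
  have sa: "sigma_algebra (space borel) (sets borel :: 'a set set)" by (rule sets.sigma_algebra_axioms)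
  have pos: "positive (sets borel) (\<lambda>A. ennreal (f A))" unfolding positive_def using f0 by simp
  have cadd: "countably_additive (sets borel) (\<lambda>A. ennreal (f A))"
    unfolding countably_additive_def
  proof (intro allI impI)
    fix A :: "nat \<Rightarrow> 'a set" assume A: "range A \<subseteq> sets borel" "disjoint_family A" "\<Union> (range A) \<in> sets borel"
    have "(\<lambda>i. ennreal (f (A i))) sums ennreal (f (\<Union>i. A i))"
      using ca[OF A(1,2)] fnn A by (subst sums_ennreal) auto
    then show "(\<Sum>i. ennreal (f (A i))) = ennreal (f (\<Union> (range A)))" by (simp add: sums_iff)
  qed
  define m where "m = measure_of (space borel) (sets borel) (\<lambda>A. ennreal (f A))"
  have msets: "sets m = sets borel" unfolding m_def by (rule sigma_algebra.sets_measure_of_eq[OF sa])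
  have mspace: "space m = UNIV" unfolding m_def by (simp add: sigma_algebra.space_measure_of_eq[OF sa])
  have mem: "emeasure m A = ennreal (f A)" if "A \<in> sets borel" for A
    unfolding m_def by (rule emeasure_measure_of_sigma[OF sa pos cadd that])
  have mmeas: "measure m A = f A" if "A \<in> sets borel" for A
    using mem[OF that] fnn[OF that] by (simp add: measure_def)
  have mprob: "prob_space m" by (rule prob_spaceI) (use mem[of UNIV] f1 mspace in simp)
  have mP: "m \<in> space (prob_algebra borel)" using msets mprob by (simp add: space_prob_algebra)
  have key: "L \<phi> = integral\<^sup>L m \<phi>" if "adm \<phi>" for \<phi>
  proof -
    have bnd: "\<bar>L \<phi> - integral\<^sup>L m \<phi>\<bar> \<le> 1 / real k" if "0 < k" for k :: nat
    proof -
      define \<psi> where "\<psi> = (\<lambda>x. real_of_int \<lfloor>real k * \<phi> x\<rfloor> / real k)"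
      define E where "E j = {x. \<lfloor>real k * \<phi> x\<rfloor> = j}" for j
      have \<phi>m: "\<phi> \<in> borel_measurable borel" using \<open>adm \<phi>\<close> adm_def by blast
      have Em: "E j \<in> sets borel" for j unfolding E_def using \<phi>m by measurable
      note ap = approx_int[OF _ \<open>adm \<phi>\<close> that, folded \<psi>_def, folded E_def]
      have L\<psi>: "L \<psi> = (\<Sum>j\<in>{-int k..int k}. (real_of_int j / real k) * f (E j))"
      proof (rule LIMSEQ_unique[OF Lt[OF ap(1)[OF P[of 0]]]])
        show "(\<lambda>s. integral\<^sup>L (\<mu> s) \<psi>) \<longlonglongrightarrow> (\<Sum>j\<in>{-int k..int k}. (real_of_int j / real k) * f (E j))"
          unfolding ap(4)[OF P] by (intro tendsto_sum tendsto_mult_left fmeas Em)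
      qed
      have m\<psi>: "integral\<^sup>L m \<psi> = L \<psi>" unfolding L\<psi> ap(4)[OF mP] using mmeas[OF Em] by simp
      have d: "(\<lambda>s. integral\<^sup>L (\<mu> s) \<phi> - integral\<^sup>L (\<mu> s) \<psi>) \<longlonglongrightarrow> L \<phi> - L \<psi>"
        by (intro tendsto_diff Lt \<open>adm \<phi>\<close> ap(1)[OF P[of 0]])
      have "0 \<le> L \<phi> - L \<psi>" by (rule LIMSEQ_le_const[OF d]) (use ap(2)[OF P] in auto)
      moreover have "L \<phi> - L \<psi> \<le> 1 / real k" by (rule LIMSEQ_le_const2[OF d]) (use ap(3)[OF P] in auto)
      moreover note ap(2,3)[OF mP]
      ultimately show ?thesis using m\<psi> by linarith
    qed
    show ?thesis
    proof (rule ccontr)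
      assume "L \<phi> \<noteq> integral\<^sup>L m \<phi>"
      then have dp: "0 < \<bar>L \<phi> - integral\<^sup>L m \<phi>\<bar>" by simp
      obtain k :: nat where k: "1 / \<bar>L \<phi> - integral\<^sup>L m \<phi>\<bar> < real k" using reals_Archimedean2 by blast
      then have kp: "0 < k" using dp by (metis divide_pos_pos less_trans of_nat_0_less_iff zero_less_one)
      have "1 < real k * \<bar>L \<phi> - integral\<^sup>L m \<phi>\<bar>" using k dp by (simp add: divide_less_eq)
      moreover have "real k * \<bar>L \<phi> - integral\<^sup>L m \<phi>\<bar> \<le> 1"
        using bnd[OF kp] kp by (simp add: le_divide_eq mult.commute)
      ultimately show False by simp
    qed
  qed
  show ?thesis using mP Lt key by metis
qed



lemma chain_step:
  fixes Q :: "'a::euclidean_space \<Rightarrow> 'a measure" and X :: "nat \<Rightarrow> 'b \<Rightarrow> 'a"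
  assumes K: "Q \<in> borel \<rightarrow>\<^sub>M prob_algebra borel" and ch: "markov_chain M Q X"
  shows "distr M borel (X (Suc t)) = distr M borel (X t) \<bind> Q"
proof -
  have pM: "prob_space M" and Xm: "\<And>t. X t \<in> borel_measurable M"
    and mk: "\<And>t (A :: nat \<Rightarrow> 'a set) B. (\<forall>i\<le>t. A i \<in> sets borel) \<Longrightarrow> B \<in> sets borel \<Longrightarrow>
        measure M {\<omega> \<in> space M. (\<forall>i\<le>t. X i \<omega> \<in> A i) \<and> X (Suc t) \<omega> \<in> B}
        = (\<integral>\<omega>. indicator {\<omega> \<in> space M. \<forall>i\<le>t. X i \<omega> \<in> A i} \<omega> * measure (Q (X t \<omega>)) B \<partial>M)"
    using ch unfolding markov_chain_def by auto
  interpret prob_space M by (rule pM)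
  have K': "Q \<in> borel \<rightarrow>\<^sub>M subprob_algebra borel" by (rule measurable_prob_algebraD[OF K])
  have Qx: "prob_space (Q x)" "sets (Q x) = sets borel" for x
    using measurable_space[OF K, of x] by (auto simp: space_prob_algebra)
  have ne: "space (distr M borel (X t)) \<noteq> {}" by simp
  have sb: "sets (distr M borel (X t) \<bind> Q) = sets borel"
    by (rule sets_bind) (simp_all add: Qx)
  have Kd: "Q \<in> distr M borel (X t) \<rightarrow>\<^sub>M subprob_algebra borel"
    using K' measurable_cong_sets[of "distr M borel (X t)" borel "subprob_algebra borel" "subprob_algebra borel"]
    by simp
  show ?thesis
  proof (rule measure_eqI)
    show "sets (distr M borel (X (Suc t))) = sets (distr M borel (X t) \<bind> Q)"
      using sb by simp
  next
    fix A assume "A \<in> sets (distr M borel (X (Suc t)))"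
    then have A: "A \<in> sets borel" by simp
    have mQ: "(\<lambda>\<omega>. measure (Q (X t \<omega>)) A) \<in> borel_measurable M"
      using measurable_compose[OF Xm[of t] measurable_compose[OF K measurable_measure_prob_algebra[OF A]]] by simp
    have iQ: "integrable M (\<lambda>\<omega>. measure (Q (X t \<omega>)) A)"
      apply (rule integrable_const_bound[where B=1])
       apply (rule AE_I2)
       apply (simp add: prob_space.prob_le_1[OF Qx(1)])
      apply (rule mQ)
      done
    have "measure M {\<omega> \<in> space M. (\<forall>i\<le>t. X i \<omega> \<in> UNIV) \<and> X (Suc t) \<omega> \<in> A}
        = (\<integral>\<omega>. indicator {\<omega> \<in> space M. \<forall>i\<le>t. X i \<omega> \<in> UNIV} \<omega> * measure (Q (X t \<omega>)) A \<partial>M)"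
      by (rule mk) (simp_all add: A)
    also have "\<dots> = (\<integral>\<omega>. measure (Q (X t \<omega>)) A \<partial>M)"
      by (rule Bochner_Integration.integral_cong) (simp_all add: indicator_def)
    finally have eq0: "measure M {\<omega> \<in> space M. (\<forall>i\<le>t. X i \<omega> \<in> UNIV) \<and> X (Suc t) \<omega> \<in> A} = (\<integral>\<omega>. measure (Q (X t \<omega>)) A \<partial>M)" .
    have seq: "{\<omega> \<in> space M. (\<forall>i\<le>t. X i \<omega> \<in> UNIV) \<and> X (Suc t) \<omega> \<in> A} = X (Suc t) -` A \<inter> space M"
      by blast
    have eq: "measure M (X (Suc t) -` A \<inter> space M) = (\<integral>\<omega>. measure (Q (X t \<omega>)) A \<partial>M)"
      using eq0 unfolding seq .
    have "emeasure (distr M borel (X (Suc t))) A = emeasure M (X (Suc t) -` A \<inter> space M)"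
      by (rule emeasure_distr[OF Xm A])
    also have "\<dots> = ennreal (\<integral>\<omega>. measure (Q (X t \<omega>)) A \<partial>M)"
      unfolding emeasure_eq_measure eq ..
    also have "\<dots> = (\<integral>\<^sup>+\<omega>. ennreal (measure (Q (X t \<omega>)) A) \<partial>M)"
      by (rule nn_integral_eq_integral[symmetric, OF iQ]) (simp add: AE_I2)
    also have "\<dots> = (\<integral>\<^sup>+\<omega>. emeasure (Q (X t \<omega>)) A \<partial>M)"
      by (rule nn_integral_cong) (simp add: finite_measure.emeasure_eq_measure[OF prob_space.finite_measure[OF Qx(1)]])
    also have "\<dots> = (\<integral>\<^sup>+x. emeasure (Q x) A \<partial>distr M borel (X t))"
      by (rule nn_integral_distr[symmetric, OF Xm])
         (rule measurable_compose[OF Kd measurable_emeasure_subprob_algebra[OF A]])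
    also have "\<dots> = emeasure (distr M borel (X t) \<bind> Q) A"
      by (rule emeasure_bind[symmetric, OF ne Kd]) (simp add: A)
    finally show "emeasure (distr M borel (X (Suc t))) A = emeasure (distr M borel (X t) \<bind> Q) A" .
  qed
qed

lemma tail:
  fixes X :: "nat \<Rightarrow> 'b \<Rightarrow> 'a::euclidean_space" and g :: "real \<Rightarrow> real"
  assumes ch: "markov_chain M Q X" and g_mono: "mono_on {0..} g" and gn: "0 < g (real n)"
    and mom: "(SUP k. \<integral>\<^sup>+ \<omega>. ennreal (g (norm (X k \<omega>))) \<partial>M) < \<infinity>"
  shows "measure (distr M borel (X t)) (- cball 0 (real n))
     \<le> enn2real (SUP k. \<integral>\<^sup>+ \<omega>. ennreal (g (norm (X k \<omega>))) \<partial>M) / g (real n)"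
proof -
  define S where "S = (SUP k. \<integral>\<^sup>+ \<omega>. ennreal (g (norm (X k \<omega>))) \<partial>M)"
  have pM: "prob_space M" and Xm: "X t \<in> borel_measurable M"
    using ch unfolding markov_chain_def by auto
  interpret prob_space M by (rule pM)
  have Cb: "- cball (0::'a) (real n) \<in> sets borel" by (simp add: borel_open open_Compl)
  define E where "E = X t -` (- cball 0 (real n)) \<inter> space M"
  have Em: "E \<in> sets M" unfolding E_def by (rule measurable_sets[OF Xm Cb])
  have "ennreal (g (real n)) * emeasure M E = (\<integral>\<^sup>+\<omega>. ennreal (g (real n)) * indicator E \<omega> \<partial>M)"
    by (rule nn_integral_cmult_indicator[symmetric, OF Em])
  also have "\<dots> \<le> (\<integral>\<^sup>+ \<omega>. ennreal (g (norm (X t \<omega>))) \<partial>M)"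
  proof (rule nn_integral_mono)
    fix \<omega> show "ennreal (g (real n)) * indicator E \<omega> \<le> ennreal (g (norm (X t \<omega>)))"
    proof (cases "\<omega> \<in> E")
      case True
      then have "real n \<le> norm (X t \<omega>)" unfolding E_def by (simp add: mem_cball_0)
      then have "g (real n) \<le> g (norm (X t \<omega>))" using g_mono by (auto intro: mono_onD)
      then show ?thesis using True by (simp add: ennreal_leI)
    qed simp
  qed
  also have "\<dots> \<le> S" unfolding S_def by (rule SUP_upper) simp
  finally have le: "ennreal (g (real n)) * emeasure M E \<le> S" .
  have "S = ennreal (enn2real S)" using mom unfolding S_def by (simp add: less_top)
  then have "ennreal (g (real n) * measure M E) \<le> ennreal (enn2real S)"
    using le gn by (simp add: emeasure_eq_measure ennreal_mult)
  then have "g (real n) * measure M E \<le> enn2real S" by (simp add: ennreal_le_iff)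
  then have "measure M E \<le> enn2real S / g (real n)" using gn by (simp add: le_divide_eq mult.commute)
  moreover have "measure (distr M borel (X t)) (- cball 0 (real n)) = measure M E"
    unfolding E_def by (rule measure_distr[OF Xm Cb])
  ultimately show ?thesis unfolding S_def by simp
qed



theorem mainTheorem2:
  fixes Q :: "'a::euclidean_space \<Rightarrow> 'a measure"
    and \<alpha> :: "nat \<Rightarrow> real" and \<nu> :: "nat \<Rightarrow> 'a measure"
    and g :: "real \<Rightarrow> real"
    and M :: "'b measure" and X :: "nat \<Rightarrow> 'b \<Rightarrow> 'a"
  assumes kernel: "prob_kernel Q"
    and alpha_range: "\<And>n. 0 < \<alpha> n \<and> \<alpha> n \<le> 1"
    and alpha_mono: "decseq \<alpha>"
    and nu_prob: "\<And>n. \<nu> n \<in> space (prob_algebra borel)"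
    and minor: "\<And>n x A. norm x \<le> real n \<Longrightarrow> A \<in> sets borel \<Longrightarrow>
                  measure (Q x) A \<ge> \<alpha> n * measure (\<nu> n) A"
    and g_nonneg: "\<And>u. 0 \<le> u \<Longrightarrow> 0 \<le> g u"
    and g_mono: "mono_on {0..} g"
    and g_lim: "filterlim g at_top at_top"
    and chain: "markov_chain M Q X"
    and moment: "(SUP k. \<integral>\<^sup>+ \<omega>. ennreal (g (norm (X k \<omega>))) \<partial>M) < \<infinity>"
  shows "\<exists>\<mu>. \<mu> \<in> space (prob_algebra borel) \<and>
           (\<lambda>t. tv_norm (distr M borel (X t)) \<mu>) \<longlonglongrightarrow> 0 \<and>
           (\<forall>n t. g (real n) > 0 \<longrightarrow>
              tv_norm (distr M borel (X t)) \<mu>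
                \<le> 4 * enn2real (SUP k. \<integral>\<^sup>+ \<omega>. ennreal (g (norm (X k \<omega>))) \<partial>M) / g (real n)
                  + 2 * (1 - \<alpha> n) ^ t)"
proof -
  define \<mu> where "\<mu> t = distr M borel (X t)" for t
  define S where "S = enn2real (SUP k. \<integral>\<^sup>+ \<omega>. ennreal (g (norm (X k \<omega>))) \<partial>M)"
  have K: "Q \<in> borel \<rightarrow>\<^sub>M prob_algebra borel" using kernel unfolding prob_kernel_def .
  have pM: "prob_space M" and Xm: "\<And>t. X t \<in> borel_measurable M"
    using chain unfolding markov_chain_def by auto
  have P: "\<mu> t \<in> space (prob_algebra borel)" for t
    unfolding \<mu>_def space_prob_algebra using prob_space.prob_space_distr[OF pM Xm[of t]] by simp
  have Pp: "prob_space (\<mu> t)" "sets (\<mu> t) = sets borel" for t using P[of t] by (auto simp: space_prob_algebra)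
  have step: "\<mu> (Suc t) = \<mu> t \<bind> Q" for t unfolding \<mu>_def by (rule chain_step[OF K chain])
  have S0: "0 \<le> S" unfolding S_def by simp
  have Cb: "cball (0::'a) (real n) \<in> sets borel" for n by (simp add: borel_closed)
  have tailb: "measure (\<mu> t) (- cball 0 (real n)) \<le> S / g (real n)" if "0 < g (real n)" for n t
    unfolding \<mu>_def S_def by (rule tail[OF chain g_mono that moment])
  have iter: "tv_norm (\<mu> t) (\<mu> (t+s)) \<le> 2 * (1 - \<alpha> n) ^ t + 4 * (S / g (real n))"
    if gn: "0 < g (real n)" for n t s
  proof (induction t arbitrary: s)
    case 0
    have "tv_norm (\<mu> 0) (\<mu> (0+s)) \<le> 2"
    proof (rule tv_least[OF Pp(2)])
      fix \<phi> :: "'a \<Rightarrow> real" assume "\<phi> \<in> borel_measurable borel" "\<And>x. \<bar>\<phi> x\<bar> \<le> 1"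
      then have "\<bar>integral\<^sup>L (\<mu> 0) \<phi>\<bar> \<le> 1" "\<bar>integral\<^sup>L (\<mu> (0+s)) \<phi>\<bar> \<le> 1"
        using bnd_integral Pp by blast+
      then show "\<bar>integral\<^sup>L (\<mu> 0) \<phi> - integral\<^sup>L (\<mu> (0+s)) \<phi>\<bar> \<le> 2" by linarith
    qed
    moreover have "0 \<le> S / g (real n)" using S0 gn by simp
    ultimately show ?case by simp
  next
    case (Suc t)
    have a: "0 < \<alpha> n" "\<alpha> n \<le> 1" using alpha_range by auto
    have "tv_norm (\<mu> (Suc t)) (\<mu> (Suc t + s)) \<le> (1 - \<alpha> n) * tv_norm (\<mu> t) (\<mu> (t+s)) + 4 * \<alpha> n * (S / g (real n))"
    proof (rule tv_least[OF Pp(2)])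
      fix \<phi> :: "'a \<Rightarrow> real" assume \<phi>: "\<phi> \<in> borel_measurable borel" "\<And>x. \<bar>\<phi> x\<bar> \<le> 1"
      have "\<bar>integral\<^sup>L (\<mu> t \<bind> Q) \<phi> - integral\<^sup>L (\<mu> (t+s) \<bind> Q) \<phi>\<bar>
            \<le> (1 - \<alpha> n) * tv_norm (\<mu> t) (\<mu> (t+s)) + 4 * \<alpha> n * (S / g (real n))"
        by (rule contract[OF K P P a nu_prob Cb _ tailb[OF gn] tailb[OF gn] \<phi>])
           (use minor in \<open>auto simp: mem_cball_0\<close>)
      then show "\<bar>integral\<^sup>L (\<mu> (Suc t)) \<phi> - integral\<^sup>L (\<mu> (Suc t + s)) \<phi>\<bar>
            \<le> (1 - \<alpha> n) * tv_norm (\<mu> t) (\<mu> (t+s)) + 4 * \<alpha> n * (S / g (real n))"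
        by (simp add: step)
    qed
    also have "\<dots> \<le> (1 - \<alpha> n) * (2 * (1 - \<alpha> n) ^ t + 4 * (S / g (real n))) + 4 * \<alpha> n * (S / g (real n))"
      using Suc.IH[of s] a by (intro add_mono mult_left_mono) auto
    also have "\<dots> = 2 * (1 - \<alpha> n) ^ Suc t + 4 * (S / g (real n))" by (simp add: algebra_simps add_divide_distrib[symmetric])
    finally show ?case .
  qed
  have iter\<phi>: "\<bar>integral\<^sup>L (\<mu> t) \<phi> - integral\<^sup>L (\<mu> (t+s)) \<phi>\<bar> \<le> 2 * (1 - \<alpha> n) ^ t + 4 * (S / g (real n))"
    if "0 < g (real n)" "adm \<phi>" for n t s \<phi>
  proof -
    have "\<phi> \<in> borel_measurable borel" "\<And>x. \<bar>\<phi> x\<bar> \<le> 1" using that(2) unfolding adm_def by auto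
    then have "\<bar>integral\<^sup>L (\<mu> t) \<phi> - integral\<^sup>L (\<mu> (t + s)) \<phi>\<bar> \<le> tv_norm (\<mu> t) (\<mu> (t + s))"
      by (rule tv_le[OF Pp Pp])
    then show ?thesis using iter[OF that(1), of t s] by linarith
  qed
  have choose: "\<exists>n T. 0 < g (real n) \<and> (\<forall>t\<ge>T. 2 * (1 - \<alpha> n) ^ t + 4 * (S / g (real n)) < \<epsilon>)"
    if ep: "0 < \<epsilon>" for \<epsilon>
  proof -
    define Z where "Z = 8 * S / \<epsilon> + 1"
    have Zp: "0 < Z" unfolding Z_def using S0 ep by (smt (verit) divide_nonneg_pos)
    obtain N where N: "\<forall>x\<ge>N. Z \<le> g x"
      using g_lim unfolding filterlim_at_top eventually_at_top_linorder by blast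
    define n where "n = nat \<lceil>N\<rceil>"
    have "N \<le> real n" unfolding n_def by linarith
    then have gZ: "Z \<le> g (real n)" using N by blast
    then have gp: "0 < g (real n)" using Zp by linarith
    have "4 * (S / g (real n)) \<le> 4 * (S / Z)"
      using gZ Zp S0 by (intro mult_left_mono divide_left_mono) auto
    also have "\<dots> < \<epsilon> / 2"
      unfolding Z_def using ep S0 by (simp add: field_simps)
    finally have s1: "4 * (S / g (real n)) < \<epsilon> / 2" .
    have "(\<lambda>t. (1 - \<alpha> n) ^ t) \<longlonglongrightarrow> 0"
      by (rule LIMSEQ_power_zero) (use alpha_range[of n] in auto)
    then obtain T where T: "\<forall>t\<ge>T. norm ((1 - \<alpha> n) ^ t - 0) < \<epsilon> / 4"
      using ep unfolding LIMSEQ_iff by (meson divide_pos_pos zero_less_numeral)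
    have "\<forall>t\<ge>T. 2 * (1 - \<alpha> n) ^ t + 4 * (S / g (real n)) < \<epsilon>"
    proof (intro allI impI)
      fix t assume "T \<le> t"
      then have "\<bar>(1 - \<alpha> n) ^ t\<bar> < \<epsilon> / 4" using T by auto
      then show "2 * (1 - \<alpha> n) ^ t + 4 * (S / g (real n)) < \<epsilon>" using s1 by linarith
    qed
    then show ?thesis using gp by blast
  qed
  have Cauchy: "\<exists>T. \<forall>t\<ge>T. \<forall>s \<phi>. adm \<phi> \<longrightarrow> \<bar>integral\<^sup>L (\<mu> t) \<phi> - integral\<^sup>L (\<mu> (t+s)) \<phi>\<bar> \<le> \<epsilon>"
    if ep: "0 < \<epsilon>" for \<epsilon>
  proof -
    obtain n T where nT: "0 < g (real n)" "\<forall>t\<ge>T. 2 * (1 - \<alpha> n) ^ t + 4 * (S / g (real n)) < \<epsilon>"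
      using choose[OF ep] by blast
    show ?thesis using iter\<phi>[OF nT(1)] nT(2) by (meson less_imp_le order_trans)
  qed
  obtain m where mP: "m \<in> space (prob_algebra borel)"
    and mlim: "\<And>\<phi>. adm \<phi> \<Longrightarrow> (\<lambda>s. integral\<^sup>L (\<mu> s) \<phi>) \<longlonglongrightarrow> integral\<^sup>L m \<phi>"
    using tv_limit[OF P Cauchy] by blast
  have mp: "prob_space m" "sets m = sets borel" using mP by (auto simp: space_prob_algebra)
  have bound: "tv_norm (\<mu> t) m \<le> 2 * (1 - \<alpha> n) ^ t + 4 * (S / g (real n))"
    if gn: "0 < g (real n)" for n t
  proof (rule tv_least[OF Pp(2)])
    fix \<phi> :: "'a \<Rightarrow> real" assume "\<phi> \<in> borel_measurable borel" "\<And>x. \<bar>\<phi> x\<bar> \<le> 1"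
    then have ad: "adm \<phi>" unfolding adm_def by auto
    show "\<bar>integral\<^sup>L (\<mu> t) \<phi> - integral\<^sup>L m \<phi>\<bar> \<le> 2 * (1 - \<alpha> n) ^ t + 4 * (S / g (real n))"
    proof (rule LIMSEQ_le_const2)
      show "(\<lambda>s. \<bar>integral\<^sup>L (\<mu> t) \<phi> - integral\<^sup>L (\<mu> (s + t)) \<phi>\<bar>) \<longlonglongrightarrow> \<bar>integral\<^sup>L (\<mu> t) \<phi> - integral\<^sup>L m \<phi>\<bar>"
        by (intro tendsto_intros LIMSEQ_ignore_initial_segment[OF mlim[OF ad]])
      show "\<exists>N. \<forall>s\<ge>N. \<bar>integral\<^sup>L (\<mu> t) \<phi> - integral\<^sup>L (\<mu> (s + t)) \<phi>\<bar> \<le> 2 * (1 - \<alpha> n) ^ t + 4 * (S / g (real n))"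
        using iter\<phi>[OF gn ad] by (metis add.commute)
    qed
  qed
  have conv: "(\<lambda>t. tv_norm (\<mu> t) m) \<longlonglongrightarrow> 0"
    unfolding LIMSEQ_iff
  proof (intro allI impI)
    fix r :: real assume "0 < r"
    obtain n T where nT: "0 < g (real n)" "\<forall>t\<ge>T. 2 * (1 - \<alpha> n) ^ t + 4 * (S / g (real n)) < r"
      using choose[OF \<open>0 < r\<close>] by blast
    have "norm (tv_norm (\<mu> t) m - 0) < r" if "t \<ge> T" for t
      using bound[OF nT(1), of t] nT(2) that tv_nonneg[OF Pp mp, of t] by auto
    then show "\<exists>no. \<forall>t\<ge>no. norm (tv_norm (\<mu> t) m - 0) < r" by blast
  qed
  show ?thesis
  proof (intro exI conjI allI impI)
    show "m \<in> space (prob_algebra borel)" by (rule mP)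
    show "(\<lambda>t. tv_norm (distr M borel (X t)) m) \<longlonglongrightarrow> 0" using conv unfolding \<mu>_def .
    fix n t assume "0 < g (real n)"
    then show "tv_norm (distr M borel (X t)) m
                \<le> 4 * enn2real (SUP k. \<integral>\<^sup>+ \<omega>. ennreal (g (norm (X k \<omega>))) \<partial>M) / g (real n)
                  + 2 * (1 - \<alpha> n) ^ t"
      using bound[of n t] unfolding \<mu>_def S_def by simp
  qed
qed

end
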